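(* Let $\mathfrak p\triangleleft A=\mathbb F_q[T]$ be a nonzero prime ideal with generator $f$, and let $\phi:A\to\mathcal O_{\mathfrak p}\{\tau\}$ be a Drinfeld module of rank two over $\mathcal O_{\mathfrak p}$ with supersingular reduction. Then the $\mathrm{Gal}(\overline F_{\mathfrak p}|F_{\mathfrak p})$-module $U=\phi[\mathfrak p](\overline F_{\mathfrak p})$ is irreducible.
   Context: $F_{\mathfrak p}$ is the completion of $F=\mathbb F_q(T)$ at $\mathfrak p$, $\mathcal O_{\mathfrak p}$ its valuation ring, $\overline F_{\mathfrak p}$ a separable closure; $\mathfrak p$ also denotes the normalized valuation. A Drinfeld module of rank two over $\mathcal O_{\mathfrak p}$ is an $\mathbb F_q$-algebra homomorphism $\phi:A\to\mathcal O_{\mathfrak p}\{\tau\}$ (skew polynomials, $\tau b=b^q\tau$) with $\phi(T)=T+g\tau+\Delta\tau^2$, $g\in\mathcal O_{\mathfrak p}$, $\Delta\in\mathcal O_{\mathfrak p}^*$. $U=\phi[\mathfrak p](\overline F_{\mathfrak p})$ is the $\mathfrak p$-torsion, a two-dimensional vector space over $A/\mathfrak p$ with linear Galois action. Write $\phi(f)=\sum_{n=0}^{2\deg(\mathfrak p)}a_n\tau^n$; $\phi$ has supersingular reduction if $\mathfrak p(a_i)>0$ for all $i<2\deg(\mathfrak p)$ and $\mathfrak p(a_{2\deg(\mathfrak p)})=0$. *)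

theory Defs
  imports "HOL-Computational_Algebra.Computational_Algebra"
begin

text \<open>A skew polynomial sum a_i tau^i is represented by its coefficient list [a_0, a_1, ...].\<close>

definition skc :: "'b::field list \<Rightarrow> nat \<Rightarrow> 'b" where
  "skc P i = (if i < length P then P ! i else 0)"

definition skew_add :: "'b::field list \<Rightarrow> 'b list \<Rightarrow> 'b list" where
  "skew_add P Q = map (\<lambda>n. skc P n + skc Q n) [0..<max (length P) (length Q)]"

definition skew_mult :: "nat \<Rightarrow> 'b::field list \<Rightarrow> 'b list \<Rightarrow> 'b list" where
  "skew_mult q P Q =
     map (\<lambda>n. \<Sum>i\<le>n. skc P i * skc Q (n - i) ^ (q ^ i)) [0..<length P + length Q]"

definition skew_eval :: "nat \<Rightarrow> 'b::field list \<Rightarrow> 'b \<Rightarrow> 'b" where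
  "skew_eval q P x = (\<Sum>i<length P. skc P i * x ^ (q ^ i))"

text \<open>The F_q-algebra homomorphism phi : A = F_q[T] \<rightarrow> K{tau} determined by phi(T) = phiT,
  where iota : F_q[T] \<rightarrow> K is the structure map (constants c act as iota [:c:]).
  Horner: phi(c_0 + T a') = iota c_0 + phiT * phi(a').\<close>
definition drinfeld_phi ::
  "nat \<Rightarrow> ('k::field poly \<Rightarrow> 'b::field) \<Rightarrow> 'b list \<Rightarrow> 'k poly \<Rightarrow> 'b list" where
  "drinfeld_phi q \<iota> phiT a =
     foldr (\<lambda>c acc. skew_add [\<iota> [:c:]] (skew_mult q phiT acc)) (coeffs a) []"

definition is_subfield :: "'b::field set \<Rightarrow> bool" where
  "is_subfield K \<longleftrightarrow> 0 \<in> K \<and> 1 \<in> K \<and> (\<forall>x\<in>K. \<forall>y\<in>K. x + y \<in> K \<and> x * y \<in> K)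
     \<and> (\<forall>x\<in>K. - x \<in> K \<and> inverse x \<in> K)"

definition is_ring_hom :: "('a::comm_ring_1 \<Rightarrow> 'b::comm_ring_1) \<Rightarrow> bool" where
  "is_ring_hom h \<longleftrightarrow> h 1 = 1 \<and> (\<forall>x y. h (x + y) = h x + h y \<and> h (x * y) = h x * h y)"

text \<open>v is a discrete valuation on K (value on 0 irrelevant; 0 has valuation +infinity).\<close>
definition is_valuation_on :: "'b::field set \<Rightarrow> ('b \<Rightarrow> int) \<Rightarrow> bool" where
  "is_valuation_on K v \<longleftrightarrow>
     (\<forall>x\<in>K. \<forall>y\<in>K. x \<noteq> 0 \<longrightarrow> y \<noteq> 0 \<longrightarrow> v (x * y) = v x + v y) \<and>
     (\<forall>x\<in>K. \<forall>y\<in>K. x \<noteq> 0 \<longrightarrow> y \<noteq> 0 \<longrightarrow> x + y \<noteq> 0 \<longrightarrow> v (x + y) \<ge> min (v x) (v y))"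

text \<open>"v(x) \<ge> n" with the convention v(0) = +infinity.\<close>
definition val_ge :: "('b::field \<Rightarrow> int) \<Rightarrow> 'b \<Rightarrow> int \<Rightarrow> bool" where
  "val_ge v x n \<longleftrightarrow> x = 0 \<or> v x \<ge> n"

definition val_complete :: "'b::field set \<Rightarrow> ('b \<Rightarrow> int) \<Rightarrow> bool" where
  "val_complete K v \<longleftrightarrow>
     (\<forall>s::nat \<Rightarrow> 'b. (\<forall>m. s m \<in> K) \<longrightarrow> (\<forall>n. \<exists>N. \<forall>m\<ge>N. \<forall>k\<ge>N. val_ge v (s m - s k) n) \<longrightarrow>
        (\<exists>x\<in>K. \<forall>n. \<exists>N. \<forall>m\<ge>N. val_ge v (s m - x) n))"

text \<open>(K, v, iota) is the completion F_p of F = F_q(T) at the prime p = (f):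
  iota : F_q[T] \<rightarrow> K an injective ring homomorphism whose fraction field is dense in K,
  v a discrete valuation on K extending the normalized p-adic valuation, K complete.\<close>
definition is_completion_at ::
  "'k::field_gcd poly \<Rightarrow> ('k poly \<Rightarrow> 'b::field) \<Rightarrow> 'b set \<Rightarrow> ('b \<Rightarrow> int) \<Rightarrow> bool" where
  "is_completion_at f \<iota> K v \<longleftrightarrow>
     is_subfield K \<and> is_ring_hom \<iota> \<and> inj \<iota> \<and> range \<iota> \<subseteq> K \<and>
     is_valuation_on K v \<and>
     (\<forall>a. a \<noteq> 0 \<longrightarrow> v (\<iota> a) = int (multiplicity f a)) \<and>
     (\<forall>x\<in>K. \<forall>n. \<exists>a b. b \<noteq> 0 \<and> val_ge v (x - \<iota> a / \<iota> b) n) \<and>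
     val_complete K v"

definition separable_poly :: "'b::field poly \<Rightarrow> bool" where
  "separable_poly P \<longleftrightarrow> P \<noteq> 0 \<and> coprime P (pderiv P)"

text \<open>The whole type 'b is a separable closure of the subfield K.\<close>
definition is_sep_closure_of :: "'b::field set \<Rightarrow> bool" where
  "is_sep_closure_of K \<longleftrightarrow>
     (\<forall>x. \<exists>P. separable_poly P \<and> (\<forall>i. coeff P i \<in> K) \<and> poly P x = 0) \<and>
     (\<forall>P::'b poly. separable_poly P \<and> degree P \<ge> 1 \<longrightarrow> (\<exists>x. poly P x = 0))"

definition galois_group :: "'b::field set \<Rightarrow> ('b \<Rightarrow> 'b) set" where
  "galois_group K = {\<sigma>. bij \<sigma> \<and> is_ring_hom \<sigma> \<and> (\<forall>x\<in>K. \<sigma> x = x)}"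

definition torsion :: "nat \<Rightarrow> ('k::field poly \<Rightarrow> 'b::field) \<Rightarrow> 'b list \<Rightarrow> 'k poly \<Rightarrow> 'b set" where
  "torsion q \<iota> phiT f = {x. skew_eval q (drinfeld_phi q \<iota> phiT f) x = 0}"

text \<open>W is an A-submodule (equivalently an A/p-subspace) of U for the action a.x = phi_a(x).\<close>
definition is_phi_submodule ::
  "nat \<Rightarrow> ('k::field poly \<Rightarrow> 'b::field) \<Rightarrow> 'b list \<Rightarrow> 'b set \<Rightarrow> 'b set \<Rightarrow> bool" where
  "is_phi_submodule q \<iota> phiT U W \<longleftrightarrow> W \<subseteq> U \<and> 0 \<in> W \<and>
     (\<forall>x\<in>W. \<forall>y\<in>W. x + y \<in> W) \<and>
     (\<forall>a. \<forall>x\<in>W. skew_eval q (drinfeld_phi q \<iota> phiT a) x \<in> W)"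

definition irreducible_galois_module ::
  "nat \<Rightarrow> ('k::field poly \<Rightarrow> 'b::field) \<Rightarrow> 'b list \<Rightarrow> ('b \<Rightarrow> 'b) set \<Rightarrow> 'b set \<Rightarrow> bool" where
  "irreducible_galois_module q \<iota> phiT G U \<longleftrightarrow> U \<noteq> {0} \<and>
     (\<forall>W. is_phi_submodule q \<iota> phiT U W \<longrightarrow> (\<forall>\<sigma>\<in>G. \<sigma> ` W \<subseteq> W) \<longrightarrow> W = {0} \<or> W = U)"

end

theory Submission
  imports Defs
begin


definition Lp :: "'b::field set \<Rightarrow> 'b poly \<Rightarrow> bool" where
  "Lp L p \<longleftrightarrow> (\<forall>i. coeff p i \<in> L)"

lemma subfD:
  assumes "is_subfield L"
  shows "0 \<in> L" "1 \<in> L" "x \<in> L \<Longrightarrow> y \<in> L \<Longrightarrow> x + y \<in> L"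
    "x \<in> L \<Longrightarrow> y \<in> L \<Longrightarrow> x * y \<in> L" "x \<in> L \<Longrightarrow> - x \<in> L"
    "x \<in> L \<Longrightarrow> inverse x \<in> L"
    "x \<in> L \<Longrightarrow> y \<in> L \<Longrightarrow> x - y \<in> L"
    "x \<in> L \<Longrightarrow> y \<in> L \<Longrightarrow> x / y \<in> L"
  using assms unfolding is_subfield_def diff_conv_add_uminus divide_inverse
  by blast+

lemma subf_sum:
  assumes "is_subfield L" "\<And>i. i \<in> S \<Longrightarrow> f i \<in> L"
  shows "sum f S \<in> L"
  using assms(2)
proof (induction S rule: infinite_finite_induct)
  case (infinite A) then show ?case using subfD[OF assms(1)] by simp
next
  case empty then show ?case using subfD[OF assms(1)] by simp
next
  case (insert x F) then show ?case using subfD[OF assms(1)] by simp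
qed

lemma subf_power: "is_subfield L \<Longrightarrow> x \<in> L \<Longrightarrow> x ^ n \<in> L"
  by (induction n) (auto simp: subfD)

context fixes L :: "'b::field set" assumes L: "is_subfield L"
begin

lemma Lp_0[simp]: "Lp L 0" using subfD[OF L] by (simp add: Lp_def)
lemma Lp_const: "c \<in> L \<Longrightarrow> Lp L [:c:]" using subfD[OF L] by (simp add: Lp_def coeff_pCons split: nat.split)
lemma Lp_1[simp]: "Lp L 1" using Lp_const[of 1] subfD[OF L] by (simp add: one_pCons)
lemma Lp_add: "Lp L p \<Longrightarrow> Lp L q \<Longrightarrow> Lp L (p + q)" using subfD[OF L] by (simp add: Lp_def)
lemma Lp_diff: "Lp L p \<Longrightarrow> Lp L q \<Longrightarrow> Lp L (p - q)" using subfD[OF L] by (simp add: Lp_def)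
lemma Lp_uminus: "Lp L p \<Longrightarrow> Lp L (- p)" using subfD[OF L] by (simp add: Lp_def)
lemma Lp_smult: "c \<in> L \<Longrightarrow> Lp L p \<Longrightarrow> Lp L (smult c p)" using subfD[OF L] by (simp add: Lp_def)
lemma Lp_monom: "c \<in> L \<Longrightarrow> Lp L (monom c n)" using subfD[OF L] by (simp add: Lp_def coeff_monom)
lemma Lp_mult: "Lp L p \<Longrightarrow> Lp L q \<Longrightarrow> Lp L (p * q)"
  unfolding Lp_def coeff_mult by (auto intro!: subf_sum[OF L] subfD(4)[OF L])

lemma Lp_divmod_ex:
  assumes "m \<noteq> 0" "Lp L m"
  shows "Lp L p \<Longrightarrow> \<exists>q r. Lp L q \<and> Lp L r \<and> p = q * m + r \<and> (r = 0 \<or> degree r < degree m)"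
proof (induction "degree p" arbitrary: p rule: less_induct)
  case less
  show ?case
  proof (cases "p = 0 \<or> degree p < degree m")
    case True
    then show ?thesis using less.prems by (intro exI[of _ 0] exI[of _ p]) auto
  next
    case False
    define c where "c = lead_coeff p / lead_coeff m"
    define k where "k = degree p - degree m"
    define p' where "p' = p - monom c k * m"
    have cL: "c \<in> L" unfolding c_def using less.prems assms(2) subfD[OF L] by (simp add: Lp_def)
    have Lp': "Lp L p'" unfolding p'_def by (intro Lp_diff Lp_mult Lp_monom cL less.prems assms)
    have lm: "lead_coeff m \<noteq> 0" using assms by simp
    have lp: "lead_coeff p \<noteq> 0" using False by simp
    have dk: "degree p = k + degree m" using False k_def by simp
    have deg1: "degree (monom c k * m) \<le> degree p"
    proof -
      have "degree (monom c k * m) \<le> degree (monom c k) + degree m" by (rule degree_mult_le)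
      also have "\<dots> \<le> k + degree m" using degree_monom_le[of c k] by simp
      finally show ?thesis using dk by simp
    qed
    have "coeff (monom c k * m) (degree p) = lead_coeff p"
      using lm by (simp add: coeff_monom_mult dk c_def)
    hence cz: "coeff p' (degree p) = 0" by (simp add: p'_def)
    have "degree p' \<le> degree p" unfolding p'_def by (rule degree_diff_le[OF order_refl deg1])
    hence dl: "p' = 0 \<or> degree p' < degree p" using cz
    proof (cases "p' = 0")
      case False
      then have "coeff p' (degree p') \<noteq> 0" by simp
      then have "degree p' \<noteq> degree p" using cz by metis
      then show ?thesis using \<open>degree p' \<le> degree p\<close> by simp
    qed simp
    show ?thesis
    proof (cases "p' = 0")
      case True
      then show ?thesis using cL
        by (intro exI[of _ "monom c k"] exI[of _ 0]) (auto simp: p'_def Lp_monom)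
    next
      case F2: False
      with dl have "degree p' < degree p" by simp
      from less.hyps[OF this Lp'] obtain q r where qr: "Lp L q" "Lp L r" "p' = q * m + r"
        "r = 0 \<or> degree r < degree m" by blast
      have a: "Lp L (q + monom c k)" using qr(1) cL by (simp add: Lp_add Lp_monom)
      have b: "p = (q + monom c k) * m + r"
        proof -
          have "p = (p - monom c k * m) + monom c k * m" by simp
          also have "\<dots> = (q + monom c k) * m + r" using qr(3) unfolding p'_def by (simp add: distrib_right)
          finally show ?thesis .
        qed
      show ?thesis using a b qr(2,4) by blast
    qed
  qed
qed

lemma Lp_divmod:
  assumes "Lp L p" "Lp L m"
  shows "Lp L (p div m)" "Lp L (p mod m)"
proof -
  have "Lp L (p div m) \<and> Lp L (p mod m)"
  proof (cases "m = 0")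
    case True then show ?thesis using assms by simp
  next
    case False
    from Lp_divmod_ex[OF False assms(2) assms(1)] obtain q r where qr: "Lp L q" "Lp L r"
      "p = q * m + r" "r = 0 \<or> degree r < degree m" by blast
    have rd: "r div m = 0" "r mod m = r" using qr(4) False
      by (auto simp: div_poly_less mod_poly_less)
    have "p div m = q" using qr(3) rd False by simp
    moreover have "p mod m = r" using qr(3) rd False by simp
    ultimately show ?thesis using qr by simp
  qed
  thus "Lp L (p div m)" "Lp L (p mod m)" by auto
qed

end


definition hom_on :: "'b::field set \<Rightarrow> ('b \<Rightarrow> 'b) \<Rightarrow> bool" where
  "hom_on L s \<longleftrightarrow> s 1 = 1 \<and> (\<forall>x\<in>L. \<forall>y\<in>L. s (x + y) = s x + s y \<and> s (x * y) = s x * s y)"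

context fixes L :: "'b::field set" and s :: "'b \<Rightarrow> 'b"
  assumes L: "is_subfield L" and s: "hom_on L s"
begin

lemma s_add: "x \<in> L \<Longrightarrow> y \<in> L \<Longrightarrow> s (x + y) = s x + s y" using s unfolding hom_on_def by blast
lemma s_mult: "x \<in> L \<Longrightarrow> y \<in> L \<Longrightarrow> s (x * y) = s x * s y" using s unfolding hom_on_def by blast
lemma s_1: "s 1 = 1" using s unfolding hom_on_def by blast
lemma s_0: "s 0 = 0"
proof -
  have "s (0 + 0) = s 0 + s 0" using s_add[of 0 0] subfD(1)[OF L] by blast
  then show ?thesis by (metis add_0 add_cancel_right_right)
qed
lemma s_uminus: "x \<in> L \<Longrightarrow> s (- x) = - s x"
proof -
  assume x: "x \<in> L"
  have "s (x + - x) = s x + s (- x)" using s_add[of x "-x"] subfD(5)[OF L x] x by blast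
  then have "s x + s (- x) = 0" using s_0 by simp
  then show ?thesis by (simp add: eq_neg_iff_add_eq_0 add.commute)
qed
lemma s_diff: "x \<in> L \<Longrightarrow> y \<in> L \<Longrightarrow> s (x - y) = s x - s y"
proof -
  assume x: "x \<in> L" and y: "y \<in> L"
  have "s (x + - y) = s x + s (- y)" using s_add[of x "-y"] subfD(5)[OF L y] x by blast
  then show ?thesis using s_uminus[OF y] by simp
qed
lemma s_nz: "x \<in> L \<Longrightarrow> x \<noteq> 0 \<Longrightarrow> s x \<noteq> 0"
proof
  assume x: "x \<in> L" "x \<noteq> 0" "s x = 0"
  have "s (x * inverse x) = s x * s (inverse x)" using s_mult[of x "inverse x"] subfD(6)[OF L x(1)] x(1) by blast
  then have "s 1 = 0" using x by simp
  then show False using s_1 by simp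
qed
lemma s_inj: "x \<in> L \<Longrightarrow> y \<in> L \<Longrightarrow> s x = s y \<Longrightarrow> x = y"
  using s_nz[of "x - y"] s_diff[of x y] subfD(7)[OF L, of x y] by auto
lemma s_sum: "(\<And>i. i \<in> S \<Longrightarrow> f i \<in> L) \<Longrightarrow> s (sum f S) = (\<Sum>i\<in>S. s (f i))"
proof (induction S rule: infinite_finite_induct)
  case (infinite A) then show ?case by (simp add: s_0)
next
  case empty then show ?case by (simp add: s_0)
next
  case (insert x F)
  have "sum f F \<in> L" using insert.prems by (intro subf_sum[OF L]) auto
  then show ?case using insert by (simp add: s_add)
qed

lemma coeff_mp: "coeff (map_poly s p) i = s (coeff p i)"
  by (simp add: coeff_map_poly s_0)

lemma mp_add: "Lp L p \<Longrightarrow> Lp L q \<Longrightarrow> map_poly s (p + q) = map_poly s p + map_poly s q"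
  by (rule poly_eqI) (simp add: coeff_mp s_add Lp_def)
lemma mp_diff: "Lp L p \<Longrightarrow> Lp L q \<Longrightarrow> map_poly s (p - q) = map_poly s p - map_poly s q"
  by (rule poly_eqI) (simp add: coeff_mp s_diff Lp_def)
lemma mp_mult: "Lp L p \<Longrightarrow> Lp L q \<Longrightarrow> map_poly s (p * q) = map_poly s p * map_poly s q"
proof (rule poly_eqI)
  fix n assume p: "Lp L p" and q: "Lp L q"
  have "coeff (map_poly s (p * q)) n = s (\<Sum>i\<le>n. coeff p i * coeff q (n-i))"
    by (simp add: coeff_mp coeff_mult)
  also have "\<dots> = (\<Sum>i\<le>n. s (coeff p i * coeff q (n-i)))"
    using p q unfolding Lp_def by (intro s_sum subfD(4)[OF L]) auto
  also have "\<dots> = (\<Sum>i\<le>n. s (coeff p i) * s (coeff q (n-i)))"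
    using p q unfolding Lp_def by (intro sum.cong refl s_mult) auto
  also have "\<dots> = coeff (map_poly s p * map_poly s q) n"
    by (simp add: coeff_mp coeff_mult)
  finally show "coeff (map_poly s (p * q)) n = coeff (map_poly s p * map_poly s q) n" .
qed
lemma mp_const: "map_poly s [:c:] = [:s c:]"
  by (rule poly_eqI) (simp add: coeff_mp coeff_pCons s_0 split: nat.split)
lemma mp_1: "map_poly s 1 = 1"
  using mp_const[of 1] s_1 by (simp add: one_pCons)
lemma mp_degree: "Lp L p \<Longrightarrow> degree (map_poly s p) = degree p"
proof (cases "p = 0")
  case False
  assume "Lp L p"
  then have "coeff (map_poly s p) (degree p) \<noteq> 0" using False s_nz by (simp add: coeff_mp Lp_def)
  moreover have "degree (map_poly s p) \<le> degree p" by (rule map_poly_degree_leq)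
  ultimately show ?thesis using le_degree[of "map_poly s p" "degree p"] by linarith
qed simp

end



definition hgraph :: "'b::field set \<Rightarrow> ('b \<times> 'b) set \<Rightarrow> bool" where
  "hgraph K G \<longleftrightarrow> (\<forall>x y z. (x,y)\<in>G \<longrightarrow> (x,z)\<in>G \<longrightarrow> y = z) \<and> is_subfield (Domain G) \<and> (1,1) \<in> G \<and>
     (\<forall>a b c d. (a,b)\<in>G \<longrightarrow> (c,d)\<in>G \<longrightarrow> (a+c, b+d)\<in>G \<and> (a*c, b*d)\<in>G) \<and> (\<forall>x\<in>K. (x,x)\<in>G)"

definition gf :: "('b \<times> 'b) set \<Rightarrow> 'b \<Rightarrow> 'b" where "gf G x = (THE y. (x,y)\<in>G)"

context fixes K :: "'b::field set" and G assumes hg: "hgraph K G"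
begin

lemma hg_fun: "(x,y)\<in>G \<Longrightarrow> (x,z)\<in>G \<Longrightarrow> y = z" using hg unfolding hgraph_def by blast
lemma hg_subf: "is_subfield (Domain G)" using hg unfolding hgraph_def by blast
lemma hg_1: "(1,1) \<in> G" using hg unfolding hgraph_def by blast
lemma hg_add: "(a,b)\<in>G \<Longrightarrow> (c,d)\<in>G \<Longrightarrow> (a+c, b+d)\<in>G" using hg unfolding hgraph_def by blast
lemma hg_mult: "(a,b)\<in>G \<Longrightarrow> (c,d)\<in>G \<Longrightarrow> (a*c, b*d)\<in>G" using hg unfolding hgraph_def by blast
lemma hg_K: "x \<in> K \<Longrightarrow> (x,x)\<in>G" using hg unfolding hgraph_def by blast
lemma gf_eq: "(x,y)\<in>G \<Longrightarrow> gf G x = y"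
  unfolding gf_def using hg_fun by blast
lemma gf_in: "x \<in> Domain G \<Longrightarrow> (x, gf G x) \<in> G"
  using gf_eq by blast
lemma hg_hom: "hom_on (Domain G) (gf G)"
  unfolding hom_on_def
proof (intro conjI ballI)
  show "gf G 1 = 1" using gf_eq hg_1 by blast
  fix x y assume x: "x \<in> Domain G" and y: "y \<in> Domain G"
  show "gf G (x + y) = gf G x + gf G y" using hg_add[OF gf_in[OF x] gf_in[OF y]] gf_eq by blast
  show "gf G (x * y) = gf G x * gf G y" using hg_mult[OF gf_in[OF x] gf_in[OF y]] gf_eq by blast
qed
lemma hg_KD: "K \<subseteq> Domain G" using hg_K by blast
lemma gf_K: "x \<in> K \<Longrightarrow> gf G x = x" using hg_K gf_eq by blast

end

lemma bezout_L:
  fixes L :: "'b::field set"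
  assumes L: "is_subfield L" and m: "Lp L m" "m \<noteq> 0" "poly m y = 0"
    and mmin: "\<And>p. Lp L p \<Longrightarrow> p \<noteq> 0 \<Longrightarrow> poly p y = 0 \<Longrightarrow> degree m \<le> degree p"
    and p: "Lp L p" "poly p y \<noteq> 0"
  shows "\<exists>a. Lp L a \<and> poly a y * poly p y = 1"
proof -
  define I where "I = {g. \<exists>a b. Lp L a \<and> Lp L b \<and> g = a*p + b*m}"
  have pI: "p \<in> I" unfolding I_def by (intro CollectI exI[of _ 1] exI[of _ 0]) (simp add: Lp_1[OF L] Lp_0[OF L])
  have p0: "p \<noteq> 0" using p by auto
  define n where "n = (LEAST n. \<exists>g\<in>I. g \<noteq> 0 \<and> degree g = n)"
  have "\<exists>g\<in>I. g \<noteq> 0 \<and> degree g = n" unfolding n_def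
    by (rule LeastI_ex) (use pI p0 in blast)
  then obtain g where g: "g \<in> I" "g \<noteq> 0" "degree g = n" by blast
  have gmin: "h \<in> I \<Longrightarrow> h \<noteq> 0 \<Longrightarrow> n \<le> degree h" for h
    unfolding n_def by (rule Least_le) blast
  from g(1) obtain a b where ab: "Lp L a" "Lp L b" "g = a*p + b*m" unfolding I_def by blast
  have gL: "Lp L g" using ab p m by (simp add: Lp_add[OF L] Lp_mult[OF L])
  have dvdI: "h = (h div g) * g" if hI: "h \<in> I" and hL: "Lp L h" for h
  proof -
    from hI obtain a' b' where ab': "Lp L a'" "Lp L b'" "h = a'*p + b'*m" unfolding I_def by blast
    define q where "q = h div g"
    have qL: "Lp L q" unfolding q_def by (rule Lp_divmod(1)[OF L hL gL])
    have "h mod g = h - q * g" unfolding q_def by (simp add: mod_div_mult_eq[symmetric] algebra_simps) 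
    also have "\<dots> = (a' - q*a) * p + (b' - q*b) * m" using ab(3) ab'(3) by (simp add: algebra_simps)
    finally have "h mod g \<in> I" unfolding I_def using ab ab' qL
      by (intro CollectI exI[of _ "a' - q*a"] exI[of _ "b' - q*b"]) (simp add: Lp_diff[OF L] Lp_mult[OF L])
    moreover have "h mod g = 0"
    proof (rule ccontr)
      assume "h mod g \<noteq> 0"
      with degree_mod_less'[OF g(2) this] gmin[OF calculation this] g(3) show False by simp
    qed
    ultimately show ?thesis by (metis add_0_right div_mult_mod_eq)
  qed
  have mI: "m \<in> I" unfolding I_def by (intro CollectI exI[of _ 0] exI[of _ 1]) (simp add: Lp_1[OF L] Lp_0[OF L])
  have pe: "p = (p div g) * g" by (rule dvdI[OF pI p(1)])
  have me: "m = (m div g) * g" by (rule dvdI[OF mI m(1)])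
  have gy: "poly g y \<noteq> 0" using p(2) pe by (metis mult_zero_right poly_mult)
  have my: "poly (m div g) y = 0" using m(3) me gy by (metis mult_eq_0_iff poly_mult)
  have mg0: "m div g \<noteq> 0" using me m(2) by auto
  have "degree m \<le> degree (m div g)" by (rule mmin[OF Lp_divmod(1)[OF L m(1) gL] mg0 my])
  moreover have "degree m = degree (m div g) + degree g" using me mg0 g(2) by (metis degree_mult_eq)
  ultimately have dg: "degree g = 0" by simp
  define c where "c = coeff g 0"
  have gc: "g = [:c:]" unfolding c_def using dg by (metis degree_0_id)
  have c0: "c \<noteq> 0" using g(2) gc by auto
  have cL: "c \<in> L" using gL unfolding c_def Lp_def by blast
  have "c = poly a y * poly p y" using ab(3) gc m(3) by (metis poly_add poly_mult mult_zero_right add_0_right poly_pCons poly_0 mult_zero_left add.right_neutral)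
  then have "poly (smult (inverse c) a) y * poly p y = inverse c * c" by (simp add: mult.assoc)
  then have "poly (smult (inverse c) a) y * poly p y = 1" using c0 by simp
  moreover have "Lp L (smult (inverse c) a)" using ab(1) cL by (intro Lp_smult[OF L] subfD(6)[OF L])
  ultimately show ?thesis by blast
qed



definition extG :: "('b::field \<times> 'b) set \<Rightarrow> 'b \<Rightarrow> 'b \<Rightarrow> ('b \<times> 'b) set" where
  "extG G y z = (\<lambda>p. (poly p y, poly (map_poly (gf G) p) z)) ` {p. Lp (Domain G) p}"

lemma extend:
  fixes K :: "'b::field set"
  assumes hg: "hgraph K G"
    and m: "Lp (Domain G) m" "m \<noteq> 0" "poly m y = 0"
    and mmin: "\<And>p. Lp (Domain G) p \<Longrightarrow> p \<noteq> 0 \<Longrightarrow> poly p y = 0 \<Longrightarrow> degree m \<le> degree p"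
    and z: "poly (map_poly (gf G) m) z = 0"
  shows "hgraph K (extG G y z)" "G \<subseteq> extG G y z" "(y, z) \<in> extG G y z"
proof -
  define L where "L = Domain G"
  define s where "s = gf G"
  define G' where "G' = extG G y z"
  have G'_eq: "G' = (\<lambda>p. (poly p y, poly (map_poly s p) z)) ` {p. Lp L p}"
    unfolding G'_def extG_def L_def s_def ..
  have L: "is_subfield L" unfolding L_def by (rule hg_subf[OF hg])
  have s: "hom_on L s" unfolding L_def s_def by (rule hg_hom[OF hg])
  note m = m[folded L_def] and z = z[folded s_def]
  note mmin = mmin[folded L_def]
  have wd: "poly (map_poly s p) z = poly (map_poly s p') z"
    if p: "Lp L p" "Lp L p'" "poly p y = poly p' y" for p p'
  proof -
    define r where "r = p - p'"
    have rL: "Lp L r" unfolding r_def by (rule Lp_diff[OF L p(1,2)])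
    have ry: "poly r y = 0" unfolding r_def using p(3) by simp
    have rmL: "Lp L (r mod m)" by (rule Lp_divmod(2)[OF L rL m(1)])
    have "poly (r mod m) y = 0"
    proof -
      have "poly r y = poly (r div m) y * poly m y + poly (r mod m) y"
        by (subst div_mult_mod_eq[of r m, symmetric]) (simp only: poly_add poly_mult)
      then show ?thesis using ry m(3) by simp
    qed
    then have "r mod m = 0"
    proof (rule contrapos_pp)
      assume "r mod m \<noteq> 0"
      then have "degree (r mod m) < degree m" by (rule degree_mod_less'[OF m(2)])
      then show "poly (r mod m) y \<noteq> 0" using mmin[OF rmL] \<open>r mod m \<noteq> 0\<close> by (meson leD)
    qed
    then have re: "r = (r div m) * m" by (metis add_0_right div_mult_mod_eq)
    have "map_poly s r = map_poly s (r div m) * map_poly s m"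
      by (subst re, rule mp_mult[OF L s Lp_divmod(1)[OF L rL m(1)] m(1)])
    then have "poly (map_poly s r) z = 0" using z by simp
    moreover have "map_poly s r = map_poly s p - map_poly s p'" unfolding r_def by (rule mp_diff[OF L s p(1,2)])
    ultimately show ?thesis by simp
  qed
  define D where "D = (\<lambda>p. poly p y) ` {p. Lp L p}"
  have inD: "Lp L p \<Longrightarrow> poly p y \<in> D" for p unfolding D_def by (rule image_eqI[OF refl]) simp
  have dom: "Domain G' = D" unfolding G'_eq D_def by (simp add: Domain_fst image_image)
  have subf: "is_subfield D"
    unfolding is_subfield_def
  proof (intro conjI ballI)
    show "0 \<in> D" using inD[OF Lp_0[OF L]] by simp
    show "1 \<in> D" using inD[OF Lp_1[OF L]] by simp
    fix x x' assume xD: "x \<in> D" and xD': "x' \<in> D"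
    obtain p where p1: "Lp L p" "x = poly p y" using xD unfolding D_def by (elim imageE) simp
    obtain p' where p2: "Lp L p'" "x' = poly p' y" using xD' unfolding D_def by (elim imageE) simp
    note pp = p1 p2
    show "x + x' \<in> D" using inD[OF Lp_add[OF L pp(1,3)]] pp(2,4) by simp
    show "x * x' \<in> D" using inD[OF Lp_mult[OF L pp(1,3)]] pp(2,4) by simp
  next
    fix x assume xD: "x \<in> D"
    obtain p where pp: "Lp L p" "x = poly p y" using xD unfolding D_def by (elim imageE) simp
    show "- x \<in> D" using inD[OF Lp_uminus[OF L pp(1)]] pp(2) by simp
    show "inverse x \<in> D"
    proof (cases "x = 0")
      case True then show ?thesis using inD[OF Lp_0[OF L]] by simp
    next
      case False
      have "poly p y \<noteq> 0" using False pp(2) by simp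
      from bezout_L[OF L m mmin pp(1) this] obtain a where a: "Lp L a" "poly a y * poly p y = 1" by blast
      have "poly p y * poly a y = 1" using a(2) by (simp add: mult.commute)
      then have "inverse x = poly a y" using pp(2) by (simp add: inverse_unique)
      then show ?thesis using inD[OF a(1)] by simp
    qed
  qed
  have inG': "Lp L p \<Longrightarrow> (poly p y, poly (map_poly s p) z) \<in> G'" for p
    unfolding G'_eq by (rule image_eqI[OF refl]) simp
  have hgG': "hgraph K G'"
    unfolding hgraph_def
  proof (intro conjI allI impI ballI)
    fix x y1 y2 assume h1: "(x, y1) \<in> G'" and h2: "(x, y2) \<in> G'"
    obtain p where p1: "Lp L p" "x = poly p y" "y1 = poly (map_poly s p) z"
      using h1 unfolding G'_eq by (elim imageE) simp
    obtain p' where p2: "Lp L p'" "x = poly p' y" "y2 = poly (map_poly s p') z"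
      using h2 unfolding G'_eq by (elim imageE) simp
    show "y1 = y2" using wd[of p p'] p1 p2 by simp
  next
    show "is_subfield (Domain G')" using subf dom by simp
  next
    show "(1, 1) \<in> G'" using inG'[OF Lp_1[OF L]] mp_1[OF L s] by simp
  next
    fix a b c d assume h1: "(a, b) \<in> G'" and h2: "(c, d) \<in> G'"
    obtain p where p1: "Lp L p" "a = poly p y" "b = poly (map_poly s p) z"
      using h1 unfolding G'_eq by (elim imageE) simp
    obtain p' where p2: "Lp L p'" "c = poly p' y" "d = poly (map_poly s p') z"
      using h2 unfolding G'_eq by (elim imageE) simp
    have pp: "Lp L p" "Lp L p'" "a = poly p y" "b = poly (map_poly s p) z"
      "c = poly p' y" "d = poly (map_poly s p') z" using p1 p2 by auto
    show "(a + c, b + d) \<in> G'"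
      using inG'[OF Lp_add[OF L pp(1,2)]] mp_add[OF L s pp(1,2)] pp(3-6) by simp
    show "(a * c, b * d) \<in> G'"
      using inG'[OF Lp_mult[OF L pp(1,2)]] mp_mult[OF L s pp(1,2)] pp(3-6) by simp
  next
    fix x assume x: "x \<in> K"
    have "x \<in> L" using hg_KD[OF hg] x unfolding L_def by blast
    moreover have "s x = x" unfolding s_def by (rule gf_K[OF hg x])
    ultimately show "(x, x) \<in> G'" using inG'[OF Lp_const[OF L \<open>x \<in> L\<close>]] mp_const[OF L s, of x] by simp
  qed
  have sub: "G \<subseteq> G'"
  proof
    fix xy assume xyG: "xy \<in> G"
    obtain x y' where xy: "xy = (x, y')" by (cases xy)
    have xyG': "(x, y') \<in> G" using xyG xy by simp
    then have "x \<in> L" unfolding L_def by (rule DomainI)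
    have "s x = y'" unfolding s_def by (rule gf_eq[OF hg xyG'])
    note this \<open>x \<in> L\<close>
    then show "xy \<in> G'" unfolding xy(1) using inG'[OF Lp_const[OF L \<open>x \<in> L\<close>]] mp_const[OF L s, of x] by simp
  qed
  have yz: "(y, z) \<in> G'"
  proof -
    have X: "Lp L [:0, 1:]" unfolding Lp_def using subfD(1,2)[OF L] by (simp add: coeff_pCons split: nat.split)
    have "map_poly s [:0, 1:] = [:0, 1:]"
      by (rule poly_eqI) (simp add: coeff_mp[OF L s] coeff_pCons s_0[OF L s] s_1[OF L s] split: nat.split)
    then show ?thesis using inG'[OF X] by simp
  qed
  show "hgraph K (extG G y z)" using hgG' unfolding G'_def .
  show "G \<subseteq> extG G y z" using sub unfolding G'_def .
  show "(y, z) \<in> extG G y z" using yz unfolding G'_def .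
qed



lemma sep_factor:
  assumes "separable_poly (a * b)"
  shows "separable_poly (a::'b::field poly)"
  unfolding separable_poly_def
proof
  show "a \<noteq> 0" using assms by (auto simp: separable_poly_def)
  show "coprime a (pderiv a)"
  proof (rule coprimeI)
    fix c assume c: "c dvd a" "c dvd pderiv a"
    have "c dvd a * b" using c(1) by simp
    moreover have "c dvd pderiv (a * b)" unfolding pderiv_mult using c by simp
    ultimately show "is_unit c" using assms unfolding separable_poly_def
      by (intro coprime_common_divisor[of "a*b" "pderiv (a*b)"]) auto
  qed
qed

lemma chain_union_hgraph:
  assumes C: "C \<noteq> {}" "\<And>G. G \<in> C \<Longrightarrow> hgraph K G"
    and ch: "\<And>X Y. X \<in> C \<Longrightarrow> Y \<in> C \<Longrightarrow> X \<subseteq> Y \<or> Y \<subseteq> X"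
  shows "hgraph K (\<Union>C)"
proof -
  obtain G0 where G0: "G0 \<in> C" using C(1) by blast
  have two: "\<exists>G\<in>C. (a,b) \<in> G \<and> (c,d) \<in> G" if h: "(a,b) \<in> \<Union>C" "(c,d) \<in> \<Union>C" for a b c d
  proof -
    obtain X Y where XY: "X \<in> C" "Y \<in> C" "(a,b) \<in> X" "(c,d) \<in> Y" using h by blast
    show ?thesis using ch[OF XY(1,2)] XY by blast
  qed
  have twoD: "\<exists>G\<in>C. a \<in> Domain G \<and> c \<in> Domain G" if h: "a \<in> Domain (\<Union>C)" "c \<in> Domain (\<Union>C)" for a c
  proof -
    obtain b d where "(a,b) \<in> \<Union>C" "(c,d) \<in> \<Union>C" using h by blast
    then show ?thesis using two by blast
  qed
  have oneD: "a \<in> Domain (\<Union>C) \<Longrightarrow> \<exists>G\<in>C. a \<in> Domain G" for a by blast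
  have D1: "Domain G \<subseteq> Domain (\<Union>C)" if "G \<in> C" for G using that by blast
  show ?thesis
    unfolding hgraph_def
  proof (intro conjI allI impI ballI)
    fix x y z assume "(x, y) \<in> \<Union>C" "(x, z) \<in> \<Union>C"
    from two[OF this] obtain G where "G \<in> C" "(x,y) \<in> G" "(x,z) \<in> G" by blast
    then show "y = z" using hg_fun[OF C(2)] by blast
  next
    show "is_subfield (Domain (\<Union>C))"
      unfolding is_subfield_def
    proof (intro conjI ballI)
      show "0 \<in> Domain (\<Union>C)" using subfD(1)[OF hg_subf[OF C(2)[OF G0]]] D1[OF G0] by blast
      show "1 \<in> Domain (\<Union>C)" using subfD(2)[OF hg_subf[OF C(2)[OF G0]]] D1[OF G0] by blast
      fix x y assume "x \<in> Domain (\<Union>C)" "y \<in> Domain (\<Union>C)"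
      from twoD[OF this] obtain G where G: "G \<in> C" "x \<in> Domain G" "y \<in> Domain G" by blast
      show "x + y \<in> Domain (\<Union>C)" using subfD(3)[OF hg_subf[OF C(2)[OF G(1)]] G(2,3)] D1[OF G(1)] by blast
      show "x * y \<in> Domain (\<Union>C)" using subfD(4)[OF hg_subf[OF C(2)[OF G(1)]] G(2,3)] D1[OF G(1)] by blast
    next
      fix x assume "x \<in> Domain (\<Union>C)"
      from oneD[OF this] obtain G where G: "G \<in> C" "x \<in> Domain G" by blast
      show "- x \<in> Domain (\<Union>C)" using subfD(5)[OF hg_subf[OF C(2)[OF G(1)]] G(2)] D1[OF G(1)] by blast
      show "inverse x \<in> Domain (\<Union>C)" using subfD(6)[OF hg_subf[OF C(2)[OF G(1)]] G(2)] D1[OF G(1)] by blast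
    qed
  next
    show "(1, 1) \<in> \<Union>C" using hg_1[OF C(2)[OF G0]] G0 by blast
  next
    fix a b c d assume "(a, b) \<in> \<Union>C" "(c, d) \<in> \<Union>C"
    from two[OF this] obtain G where G: "G \<in> C" "(a,b) \<in> G" "(c,d) \<in> G" by blast
    show "(a + c, b + d) \<in> \<Union>C" using hg_add[OF C(2)[OF G(1)] G(2,3)] G(1) by blast
    show "(a * c, b * d) \<in> \<Union>C" using hg_mult[OF C(2)[OF G(1)] G(2,3)] G(1) by blast
  next
    fix x assume "x \<in> K"
    then show "(x, x) \<in> \<Union>C" using hg_K[OF C(2)[OF G0]] G0 by blast
  qed
qed

lemma s_poly:
  assumes s: "hom_on UNIV s"
  shows "s (poly p x) = poly (map_poly s p) (s x)"
proof -
  have L: "is_subfield (UNIV :: 'a::field set)" unfolding is_subfield_def by simp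
  have pw: "s (x ^ n) = s x ^ n" for n
    by (induction n) (simp_all add: s_1[OF L s] s_mult[OF L s])
  have "s (poly p x) = (\<Sum>i\<le>degree p. s (coeff p i * x ^ i))"
    unfolding poly_altdef by (rule s_sum[OF L s]) simp
  also have "\<dots> = (\<Sum>i\<le>degree p. coeff (map_poly s p) i * s x ^ i)"
    by (intro sum.cong refl) (simp add: s_mult[OF L s] pw coeff_mp[OF L s])
  also have "\<dots> = poly (map_poly s p) (s x)"
    unfolding poly_altdef[of "map_poly s p"] using mp_degree[OF L s, of p]
    by (simp add: Lp_def)
  finally show ?thesis .
qed



lemma min_poly_exists:
  assumes "Lp L P" "P \<noteq> 0" "poly P y = 0"
  shows "\<exists>m. Lp L m \<and> m \<noteq> 0 \<and> poly m y = 0 \<and>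
     (\<forall>p. Lp L p \<longrightarrow> p \<noteq> 0 \<longrightarrow> poly p y = 0 \<longrightarrow> degree m \<le> degree p)"
proof -
  define n where "n = (LEAST n. \<exists>p. Lp L p \<and> p \<noteq> 0 \<and> poly p y = 0 \<and> degree p = n)"
  have "\<exists>p. Lp L p \<and> p \<noteq> 0 \<and> poly p y = 0 \<and> degree p = n" unfolding n_def
    by (rule LeastI_ex) (use assms in blast)
  then obtain m where m: "Lp L m" "m \<noteq> 0" "poly m y = 0" "degree m = n" by blast
  have "degree m \<le> degree p" if "Lp L p" "p \<noteq> 0" "poly p y = 0" for p
    unfolding m(4) n_def by (rule Least_le) (use that in blast)
  then show ?thesis using m by blast
qed

lemma min_poly_dvd:
  assumes L: "is_subfield L" and m: "Lp L m" "m \<noteq> 0" "poly m y = 0"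
    and mmin: "\<And>p. Lp L p \<Longrightarrow> p \<noteq> 0 \<Longrightarrow> poly p y = 0 \<Longrightarrow> degree m \<le> degree p"
    and P: "Lp L P" "poly P y = 0"
  shows "P = (P div m) * m"
proof -
  have rmL: "Lp L (P mod m)" by (rule Lp_divmod(2)[OF L P(1) m(1)])
  have "poly (P mod m) y = 0"
  proof -
    have "poly P y = poly (P div m) y * poly m y + poly (P mod m) y"
      by (subst div_mult_mod_eq[of P m, symmetric]) (simp only: poly_add poly_mult)
    then show ?thesis using P(2) m(3) by simp
  qed
  then have "P mod m = 0"
  proof (rule contrapos_pp)
    assume "P mod m \<noteq> 0"
    then have "degree (P mod m) < degree m" by (rule degree_mod_less'[OF m(2)])
    then show "poly (P mod m) y \<noteq> 0" using mmin[OF rmL] \<open>P mod m \<noteq> 0\<close> by (meson leD)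
  qed
  then show ?thesis by (metis add_0_right div_mult_mod_eq)
qed

lemma galois_exists:
  fixes K :: "'b::field set"
  assumes K: "is_subfield K"
    and sep: "\<And>x. \<exists>P. separable_poly P \<and> (\<forall>i. coeff P i \<in> K) \<and> poly P x = 0"
    and root: "\<And>P::'b poly. separable_poly P \<Longrightarrow> degree P \<ge> 1 \<Longrightarrow> (\<exists>x. poly P x = 0)"
    and G0: "hgraph K G0"
  shows "\<exists>\<sigma>. bij \<sigma> \<and> is_ring_hom \<sigma> \<and> (\<forall>x\<in>K. \<sigma> x = x) \<and> (\<forall>a b. (a,b)\<in>G0 \<longrightarrow> \<sigma> a = b)"
proof -
  define A where "A = {G. hgraph K G \<and> G0 \<subseteq> G}"
  have "\<exists>M\<in>A. \<forall>X\<in>A. M \<subseteq> X \<longrightarrow> X = M"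
  proof (rule Zorn_Lemma2, intro ballI)
    fix C assume C: "C \<in> chains A"
    show "\<exists>U\<in>A. \<forall>X\<in>C. X \<subseteq> U"
    proof (cases "C = {}")
      case True then show ?thesis using G0 unfolding A_def by blast
    next
      case False
      have CA: "C \<subseteq> A" using chainsD2[OF C] .
      have "hgraph K (\<Union>C)"
        by (rule chain_union_hgraph[OF False]) (use CA chainsD[OF C] in \<open>auto simp: A_def\<close>)
      moreover have "G0 \<subseteq> \<Union>C" using False CA unfolding A_def by blast
      ultimately show ?thesis unfolding A_def by blast
    qed
  qed
  then obtain M where MA: "M \<in> A" and Mmax: "\<And>X. X \<in> A \<Longrightarrow> M \<subseteq> X \<Longrightarrow> X = M" by blast
  have hM: "hgraph K M" and G0M: "G0 \<subseteq> M" using MA unfolding A_def by auto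
  define L where "L = Domain M"
  define s where "s = gf M"
  have L: "is_subfield L" unfolding L_def by (rule hg_subf[OF hM])
  have s: "hom_on L s" unfolding L_def s_def by (rule hg_hom[OF hM])
  have KL: "K \<subseteq> L" unfolding L_def by (rule hg_KD[OF hM])
  have full: "y \<in> L" for y
  proof (rule ccontr)
    assume yL: "y \<notin> L"
    obtain P where P: "separable_poly P" "\<forall>i. coeff P i \<in> K" "poly P y = 0" using sep by blast
    have PL: "Lp L P" using P(2) KL unfolding Lp_def by blast
    have P0: "P \<noteq> 0" using P(1) unfolding separable_poly_def by blast
    obtain m where m: "Lp L m" "m \<noteq> 0" "poly m y = 0"
      and mmin: "\<And>p. Lp L p \<Longrightarrow> p \<noteq> 0 \<Longrightarrow> poly p y = 0 \<Longrightarrow> degree m \<le> degree p"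
      using min_poly_exists[OF PL P0 P(3)] by blast
    have Pe: "P = (P div m) * m" by (rule min_poly_dvd[OF L m mmin PL P(3)])
    have sP: "map_poly s P = P"
    proof (rule poly_eqI)
      fix n show "coeff (map_poly s P) n = coeff P n"
        using coeff_mp[OF L s, of P n] gf_K[OF hM, of "coeff P n"] P(2) unfolding s_def by simp
    qed
    have "P = map_poly s m * map_poly s (P div m)"
      using mp_mult[OF L s Lp_divmod(1)[OF L PL m(1)] m(1)] Pe sP by (simp add: mult.commute)
    then have sepm: "separable_poly (map_poly s m)" using P(1) sep_factor by metis
    have "degree m \<noteq> 0"
    proof
      assume "degree m = 0"
      then obtain c where "m = [:c:]" by (metis degree_0_id)
      then show False using m(2,3) by simp
    qed
    then have "degree (map_poly s m) \<ge> 1" using mp_degree[OF L s m(1)] by simp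
    from root[OF sepm this] obtain z where z: "poly (map_poly s m) z = 0" by blast
    note ext = extend[OF hM m[unfolded L_def] mmin[unfolded L_def] z[unfolded s_def]]
    have "extG M y z \<in> A" using ext(1,2) G0M unfolding A_def by blast
    from Mmax[OF this ext(2)] have "extG M y z = M" .
    with ext(3) have "y \<in> Domain M" by (metis Domain.intros)
    then show False using yL unfolding L_def by simp
  qed
  have LU: "L = UNIV" using full by blast
  have sU: "hom_on UNIV s" using s LU by simp
  have LUs: "is_subfield (UNIV::'b set)" unfolding is_subfield_def by simp
  have rh: "is_ring_hom s" using sU unfolding is_ring_hom_def hom_on_def by blast
  have inj: "inj s" by (rule injI) (rule s_inj[OF LUs sU], auto)
  have surj: "surj s"
  proof -
    { fix y
      obtain P where P: "separable_poly P" "\<forall>i. coeff P i \<in> K" "poly P y = 0" using sep by blast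
      have P0: "P \<noteq> 0" using P(1) unfolding separable_poly_def by blast
      define R where "R = {x. poly P x = 0}"
      have fin: "finite R" unfolding R_def by (rule poly_roots_finite[OF P0])
      have sP: "map_poly s P = P"
      proof (rule poly_eqI)
        fix n show "coeff (map_poly s P) n = coeff P n"
          using coeff_mp[OF LUs sU, of P n] gf_K[OF hM, of "coeff P n"] P(2) unfolding s_def by simp
      qed
      have "s ` R \<subseteq> R"
      proof
        fix x assume "x \<in> s ` R"
        then obtain r where r: "r \<in> R" "x = s r" by blast
        have "s (poly P r) = poly (map_poly s P) (s r)" by (rule s_poly[OF sU])
        then have "poly P x = 0" using r sP s_0[OF LUs sU] unfolding R_def by simp
        then show "x \<in> R" unfolding R_def by simp
      qed
      then have "s ` R = R" using endo_inj_surj[OF fin] inj_on_subset[OF inj] by blast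
      moreover have "y \<in> R" using P(3) unfolding R_def by simp
      ultimately have "y \<in> range s" by blast }
    then show ?thesis by blast
  qed
  have "bij s" using inj surj by (rule bijI)
  moreover have "\<forall>x\<in>K. s x = x" using gf_K[OF hM] unfolding s_def by blast
  moreover have "\<forall>a b. (a,b)\<in>G0 \<longrightarrow> s a = b" using G0M gf_eq[OF hM] unfolding s_def by blast
  ultimately show ?thesis using rh by blast
qed



lemma hgraph_Id: "is_subfield K \<Longrightarrow> hgraph K (Id_on K)"
proof -
  assume K: "is_subfield K"
  have "Domain (Id_on K) = K" by auto
  then show ?thesis unfolding hgraph_def using K subfD[OF K] by (auto simp: Id_on_def)
qed

lemma galois_transitive:
  fixes K :: "'b::field set"
  assumes K: "is_subfield K" and sc: "is_sep_closure_of K"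
    and F: "Lp K F" "F \<noteq> 0" "poly F w = 0" "poly F u = 0"
    and irr: "\<And>a b. Lp K a \<Longrightarrow> Lp K b \<Longrightarrow> F = a * b \<Longrightarrow> degree a = 0 \<or> degree b = 0"
  shows "\<exists>\<sigma>\<in>galois_group K. \<sigma> w = u"
proof -
  have sep: "\<And>x. \<exists>P. separable_poly P \<and> (\<forall>i. coeff P i \<in> K) \<and> poly P x = 0"
    and root: "\<And>P::'b poly. separable_poly P \<Longrightarrow> degree P \<ge> 1 \<Longrightarrow> (\<exists>x. poly P x = 0)"
    using sc unfolding is_sep_closure_of_def by auto
  define I where "I = Id_on K"
  have hI: "hgraph K I" unfolding I_def by (rule hgraph_Id[OF K])
  have DI: "Domain I = K" unfolding I_def by auto
  obtain m where m: "Lp K m" "m \<noteq> 0" "poly m w = 0"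
    and mmin: "\<And>p. Lp K p \<Longrightarrow> p \<noteq> 0 \<Longrightarrow> poly p w = 0 \<Longrightarrow> degree m \<le> degree p"
    using min_poly_exists[OF F(1,2,3)] by blast
  have Fe: "F = (F div m) * m" by (rule min_poly_dvd[OF K m mmin F(1,3)])
  have "degree m \<noteq> 0"
  proof
    assume "degree m = 0"
    then obtain c where "m = [:c:]" by (metis degree_0_id)
    then show False using m(2,3) by simp
  qed
  then have "degree (F div m) = 0" using irr[OF Lp_divmod(1)[OF K F(1) m(1)] m(1) Fe] by simp
  then obtain c where c: "F div m = [:c:]" by (metis degree_0_id)
  have "c \<noteq> 0" using Fe c F(2) by auto
  then have mu: "poly m u = 0" using F(4) Fe c by simp
  have gI: "gf I x = x" if "x \<in> K" for x using gf_K[OF hI that] .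
  have "map_poly (gf I) m = m"
  proof (rule poly_eqI)
    fix n show "coeff (map_poly (gf I) m) n = coeff m n"
      using coeff_mp[OF hg_subf[OF hI] hg_hom[OF hI], of m n] gI[of "coeff m n"] m(1) unfolding Lp_def by simp
  qed
  then have z: "poly (map_poly (gf I) m) u = 0" using mu by simp
  note ext = extend[OF hI m[folded DI] mmin[folded DI] z]
  from galois_exists[OF K sep root ext(1)] obtain \<sigma> where
    \<sigma>: "bij \<sigma>" "is_ring_hom \<sigma>" "\<forall>x\<in>K. \<sigma> x = x" "\<forall>a b. (a,b)\<in>extG I w u \<longrightarrow> \<sigma> a = b" by blast
  have "\<sigma> w = u" using \<sigma>(4) ext(3) by blast
  moreover have "\<sigma> \<in> galois_group K" unfolding galois_group_def using \<sigma>(1-3) by blast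
  ultimately show ?thesis by blast
qed



context fixes K :: "'b::field set" and v :: "'b \<Rightarrow> int"
  assumes K: "is_subfield K" and v: "is_valuation_on K v"
begin

lemma v_mult: "x \<in> K \<Longrightarrow> y \<in> K \<Longrightarrow> x \<noteq> 0 \<Longrightarrow> y \<noteq> 0 \<Longrightarrow> v (x * y) = v x + v y"
  using v unfolding is_valuation_on_def by blast
lemma v_add: "x \<in> K \<Longrightarrow> y \<in> K \<Longrightarrow> x \<noteq> 0 \<Longrightarrow> y \<noteq> 0 \<Longrightarrow> x + y \<noteq> 0 \<Longrightarrow> v (x + y) \<ge> min (v x) (v y)"
  using v unfolding is_valuation_on_def by blast
lemma v_1: "v 1 = 0"
  using v_mult[of 1 1] subfD(2)[OF K] by simp
lemma v_m1: "v (- 1) = 0"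
  using v_mult[of "-1" "-1"] subfD(2,5)[OF K] v_1 by simp
lemma v_neg: "x \<in> K \<Longrightarrow> x \<noteq> 0 \<Longrightarrow> v (- x) = v x"
  using v_mult[of "-1" x] subfD(2,5)[OF K] v_m1 by simp

lemma vg_add: "x \<in> K \<Longrightarrow> y \<in> K \<Longrightarrow> val_ge v x c \<Longrightarrow> val_ge v y c \<Longrightarrow> val_ge v (x + y) c"
  unfolding val_ge_def using v_add[of x y] by fastforce
lemma vg_mult: "x \<in> K \<Longrightarrow> y \<in> K \<Longrightarrow> val_ge v x a \<Longrightarrow> val_ge v y b \<Longrightarrow> val_ge v (x * y) (a + b)"
proof -
  assume h: "x \<in> K" "y \<in> K" "val_ge v x a" "val_ge v y b"
  show ?thesis
  proof (cases "x = 0 \<or> y = 0")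
    case True then show ?thesis by (auto simp: val_ge_def)
  next
    case False
    then have "v (x * y) = v x + v y" using v_mult[OF h(1,2)] by simp
    moreover have "v x \<ge> a" "v y \<ge> b" using h(3,4) False unfolding val_ge_def by auto
    ultimately show ?thesis unfolding val_ge_def by simp
  qed
qed
lemma vg_sum: "(\<And>i. i \<in> S \<Longrightarrow> f i \<in> K) \<Longrightarrow> (\<And>i. i \<in> S \<Longrightarrow> val_ge v (f i) c) \<Longrightarrow> val_ge v (sum f S) c"
proof (induction S rule: infinite_finite_induct)
  case (infinite A) then show ?case by (simp add: val_ge_def)
next
  case empty then show ?case by (simp add: val_ge_def)
next
  case (insert x F)
  have "sum f F \<in> K" using insert.prems by (intro subf_sum[OF K]) auto
  then show ?case using insert by (simp add: vg_add)
qed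
lemma v_strict:
  assumes "x \<in> K" "y \<in> K" "x \<noteq> 0" "val_ge v y (v x + 1)"
  shows "x + y \<noteq> 0 \<and> v (x + y) = v x"
proof (cases "y = 0")
  case True then show ?thesis using assms by simp
next
  case False
  then have vy: "v y > v x" using assms(4) unfolding val_ge_def by simp
  have ne: "x + y \<noteq> 0"
  proof
    assume "x + y = 0"
    then have "y = - x" by (simp add: add_eq_0_iff)
    then show False using vy v_neg[OF assms(1,3)] by simp
  qed
  have xy: "x + y \<in> K" using subfD(3)[OF K assms(1,2)] .
  have "v (x + y) \<ge> v x" using v_add[OF assms(1,2,3) False ne] vy by simp
  moreover have "v x \<ge> min (v (x + y)) (v (- y))"
    using v_add[OF xy subfD(5)[OF K assms(2)] ne] False assms(3) by simp
  ultimately show ?thesis using ne v_neg[OF assms(2) False] vy by linarith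
qed

lemma minval:
  assumes r: "Lp K r" "r \<noteq> 0"
  shows "\<exists>\<alpha> i0. coeff r i0 \<noteq> 0 \<and> v (coeff r i0) = \<alpha> \<and> (\<forall>i. val_ge v (coeff r i) \<alpha>)
     \<and> (\<forall>i<i0. val_ge v (coeff r i) (\<alpha> + 1)) \<and> i0 \<le> degree r"
proof -
  define S where "S = {i. i \<le> degree r \<and> coeff r i \<noteq> 0}"
  have finS: "finite S" unfolding S_def by simp
  have neS: "S \<noteq> {}" unfolding S_def using r(2) by (intro ex_in_conv[THEN iffD1] exI[of _ "degree r"]) simp
  define \<alpha> where "\<alpha> = Min ((\<lambda>i. v (coeff r i)) ` S)"
  have "\<alpha> \<in> (\<lambda>i. v (coeff r i)) ` S" unfolding \<alpha>_def using finS neS by (intro Min_in) auto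
  then have exi: "\<exists>i. coeff r i \<noteq> 0 \<and> v (coeff r i) = \<alpha>" unfolding S_def by auto
  have ge: "val_ge v (coeff r i) \<alpha>" for i
  proof (cases "coeff r i = 0")
    case False
    then have "i \<in> S" unfolding S_def using le_degree by auto
    then show ?thesis unfolding val_ge_def \<alpha>_def using finS by auto
  qed (simp add: val_ge_def)
  define i0 where "i0 = (LEAST i. coeff r i \<noteq> 0 \<and> v (coeff r i) = \<alpha>)"
  have i0: "coeff r i0 \<noteq> 0 \<and> v (coeff r i0) = \<alpha>" unfolding i0_def by (rule LeastI_ex[OF exi])
  have lt: "val_ge v (coeff r i) (\<alpha> + 1)" if "i < i0" for i
  proof -
    have "\<not> (coeff r i \<noteq> 0 \<and> v (coeff r i) = \<alpha>)" using that unfolding i0_def by (rule not_less_Least)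
    then show ?thesis using ge[of i] unfolding val_ge_def by auto
  qed
  have "i0 \<le> degree r" using i0 le_degree by blast
  then show ?thesis using i0 ge lt by blast
qed

lemma eisenstein:
  assumes F: "Lp K F" "coeff F 0 \<noteq> 0" "v (coeff F 0) = 1"
    "\<And>k. 0 < k \<Longrightarrow> k < degree F \<Longrightarrow> val_ge v (coeff F k) 1"
    "v (lead_coeff F) = 0"
    and rs: "Lp K r" "Lp K s" "F = r * s"
  shows "degree r = 0 \<or> degree s = 0"
proof (rule ccontr)
  assume dd: "\<not> (degree r = 0 \<or> degree s = 0)"
  have F0: "F \<noteq> 0" using F(2) by auto
  have r0: "r \<noteq> 0" and s0: "s \<noteq> 0" using F0 rs(3) by auto
  obtain \<alpha> i0 where A: "coeff r i0 \<noteq> 0" "v (coeff r i0) = \<alpha>" "\<And>i. val_ge v (coeff r i) \<alpha>"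
    "\<And>i. i < i0 \<Longrightarrow> val_ge v (coeff r i) (\<alpha> + 1)" "i0 \<le> degree r"
    using minval[OF rs(1) r0] by blast
  obtain \<beta> j0 where B: "coeff s j0 \<noteq> 0" "v (coeff s j0) = \<beta>" "\<And>i. val_ge v (coeff s i) \<beta>"
    "\<And>i. i < j0 \<Longrightarrow> val_ge v (coeff s i) (\<beta> + 1)" "j0 \<le> degree s"
    using minval[OF rs(2) s0] by blast
  have rK: "coeff r i \<in> K" for i using rs(1) unfolding Lp_def by blast
  have sK: "coeff s i \<in> K" for i using rs(2) unfolding Lp_def by blast
  have cF: "coeff F n = (\<Sum>i\<le>n. coeff r i * coeff s (n - i))" for n using rs(3) by (simp add: coeff_mult)
  have allge: "val_ge v (coeff F n) (\<alpha> + \<beta>)" for n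
    unfolding cF by (rule vg_sum) (auto intro: subfD(4)[OF K] rK sK vg_mult A(3) B(3))
  define k where "k = i0 + j0"
  have rest: "val_ge v (\<Sum>i\<in>{..k} - {i0}. coeff r i * coeff s (k - i)) (\<alpha> + \<beta> + 1)"
  proof (rule vg_sum)
    fix i assume "i \<in> {..k} - {i0}"
    then have i: "i \<le> k" "i \<noteq> i0" by auto
    show "val_ge v (coeff r i * coeff s (k - i)) (\<alpha> + \<beta> + 1)"
    proof (cases "i < i0")
      case True
      have "val_ge v (coeff r i * coeff s (k - i)) ((\<alpha> + 1) + \<beta>)"
        by (rule vg_mult[OF rK sK A(4)[OF True] B(3)])
      then show ?thesis by (simp add: algebra_simps)
    next
      case False
      then have "k - i < j0" using i unfolding k_def by auto
      have "val_ge v (coeff r i * coeff s (k - i)) (\<alpha> + (\<beta> + 1))"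
        by (rule vg_mult[OF rK sK A(3) B(4)[OF \<open>k - i < j0\<close>]])
      then show ?thesis by (simp add: algebra_simps)
    qed
  qed (intro subfD(4)[OF K] rK sK)
  have split: "coeff F k = coeff r i0 * coeff s j0 + (\<Sum>i\<in>{..k} - {i0}. coeff r i * coeff s (k - i))"
    unfolding cF by (subst sum.remove[of _ i0]) (auto simp: k_def)
  have vprod: "v (coeff r i0 * coeff s j0) = \<alpha> + \<beta>" using v_mult[OF rK sK A(1) B(1)] A(2) B(2) by simp
  have prodne: "coeff r i0 * coeff s j0 \<noteq> 0" using A(1) B(1) by simp
  have sumK: "(\<Sum>i\<in>{..k} - {i0}. coeff r i * coeff s (k - i)) \<in> K"
    by (rule subf_sum[OF K]) (intro subfD(4)[OF K] rK sK)
  have ck: "coeff F k \<noteq> 0 \<and> v (coeff F k) = \<alpha> + \<beta>"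
    using v_strict[OF subfD(4)[OF K rK sK] sumK prodne] rest vprod unfolding split by simp
  have degF: "degree F = degree r + degree s" using rs(3) r0 s0 by (simp add: degree_mult_eq)
  have lcF: "lead_coeff F \<noteq> 0" using F0 by simp
  have "\<alpha> + \<beta> \<le> 0" using allge[of "degree F"] lcF F(5) unfolding val_ge_def by simp
  have kN: "k = degree F"
  proof (rule ccontr)
    assume "k \<noteq> degree F"
    moreover have "k \<le> degree F" using A(5) B(5) degF unfolding k_def by simp
    ultimately have "k < degree F" by simp
    then have "v (coeff F k) \<ge> 1"
    proof (cases "k = 0")
      case True then show ?thesis using F(3) by simp
    next
      case False then show ?thesis using F(4)[of k] \<open>k < degree F\<close> ck unfolding val_ge_def by simp
    qed
    then show False using ck \<open>\<alpha> + \<beta> \<le> 0\<close> by simp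
  qed
  then have "i0 = degree r" "j0 = degree s" using A(5) B(5) degF unfolding k_def by auto
  then have "0 < i0" "0 < j0" using dd by auto
  have c0: "coeff F 0 = coeff r 0 * coeff s 0" unfolding cF by simp
  have "val_ge v (coeff F 0) ((\<alpha> + 1) + (\<beta> + 1))"
    unfolding c0 by (rule vg_mult[OF rK sK A(4)[OF \<open>0 < i0\<close>] B(4)[OF \<open>0 < j0\<close>]])
  moreover have "\<alpha> + \<beta> = 0" using ck kN F(5) by simp
  ultimately show False using F(2,3) unfolding val_ge_def by simp
qed

end


lemma skc_add: "skc (skew_add P Q) n = skc P n + skc Q n"
  unfolding skew_add_def skc_def by (auto simp: nth_map_upt)

lemma skc_mult:
  assumes q: "q > 0"
  shows "skc (skew_mult q P Q) n = (\<Sum>i\<le>n. skc P i * skc Q (n - i) ^ (q ^ i))"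
proof (cases "n < length P + length Q")
  case True
  then show ?thesis unfolding skew_mult_def by (simp add: skc_def[of "map _ _"] nth_map_upt)
next
  case False
  have Z: "skc P i * skc Q (n - i) ^ (q ^ i) = 0" if "i \<le> n" for i
  proof (cases "i < length P")
    case True
    then have "skc Q (n - i) = 0" using False that unfolding skc_def by auto
    then show ?thesis using q by simp
  next
    case False
    then show ?thesis unfolding skc_def by simp
  qed
  have "(\<Sum>i\<le>n. skc P i * skc Q (n - i) ^ (q ^ i)) = 0" by (intro sum.neutral ballI Z) simp
  then show ?thesis using False unfolding skew_mult_def skc_def by simp
qed

lemma skc_single: "skc [a] n = (if n = 0 then a else 0)"
  unfolding skc_def by simp

lemma skc_nil: "skc [] n = 0" unfolding skc_def by simp

definition PhiL :: "nat \<Rightarrow> ('k::field poly \<Rightarrow> 'b::field) \<Rightarrow> 'b list \<Rightarrow> 'k list \<Rightarrow> 'b list" where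
  "PhiL q \<iota> phiT xs = foldr (\<lambda>c acc. skew_add [\<iota> [:c:]] (skew_mult q phiT acc)) xs []"

lemma drinfeld_PhiL: "drinfeld_phi q \<iota> phiT a = PhiL q \<iota> phiT (coeffs a)"
  unfolding drinfeld_phi_def PhiL_def ..

lemma PhiL_Cons:
  assumes "q > 0"
  shows "skc (PhiL q \<iota> phiT (c # ys)) n = (if n = 0 then \<iota> [:c:] else 0) +
     (\<Sum>i\<le>n. skc phiT i * skc (PhiL q \<iota> phiT ys) (n - i) ^ (q ^ i))"
  unfolding PhiL_def by (simp add: skc_add skc_mult[OF assms] skc_single)

lemma PhiL_Nil: "skc (PhiL q \<iota> phiT []) n = 0"
  unfolding PhiL_def by (simp add: skc_nil)

lemma PhiL_K:
  assumes K: "is_subfield K" and q: "q > 0" and iK: "\<And>c. \<iota> [:c:] \<in> K" and pK: "\<And>i. skc phiT i \<in> K"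
  shows "skc (PhiL q \<iota> phiT xs) n \<in> K"
proof (induction xs arbitrary: n)
  case Nil then show ?case using subfD(1)[OF K] by (simp add: PhiL_Nil)
next
  case (Cons c ys)
  have "(if n = 0 then \<iota> [:c:] else 0) \<in> K" using iK subfD(1)[OF K] by simp
  moreover have "(\<Sum>i\<le>n. skc phiT i * skc (PhiL q \<iota> phiT ys) (n - i) ^ (q ^ i)) \<in> K"
    by (intro subf_sum[OF K] subfD(4)[OF K] pK subf_power[OF K] Cons.IH)
  ultimately show ?case unfolding PhiL_Cons[OF q] by (rule subfD(3)[OF K])
qed

lemma PhiL_vanish:
  assumes q: "q > 0" and phi3: "\<And>i. i \<ge> 3 \<Longrightarrow> skc phiT i = 0"
  shows "2 * length xs - 1 \<le> n \<Longrightarrow> skc (PhiL q \<iota> phiT xs) n = 0"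
proof (induction xs arbitrary: n)
  case Nil then show ?case by (simp add: PhiL_Nil)
next
  case (Cons c ys)
  have n1: "n \<noteq> 0" using Cons.prems by simp
  have Z: "skc phiT i * skc (PhiL q \<iota> phiT ys) (n - i) ^ (q ^ i) = 0" if "i \<le> n" for i
  proof (cases "i \<ge> 3")
    case True then show ?thesis using phi3 by simp
  next
    case False
    then have "2 * length ys - 1 \<le> n - i" using Cons.prems by auto
    then have "skc (PhiL q \<iota> phiT ys) (n - i) = 0" by (rule Cons.IH)
    then show ?thesis using q by simp
  qed
  have "(\<Sum>i\<le>n. skc phiT i * skc (PhiL q \<iota> phiT ys) (n - i) ^ (q ^ i)) = 0" by (intro sum.neutral ballI Z) simp
  then show ?case unfolding PhiL_Cons[OF q] using n1 by simp
qed

lemma PhiL_0: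
  assumes q: "q > 0" and h: "is_ring_hom \<iota>" and p0: "skc phiT 0 = \<iota> [:0, 1:]"
  shows "skc (PhiL q \<iota> phiT xs) 0 = \<iota> (Poly xs)"
proof (induction xs)
  case Nil
  have "\<iota> 0 = 0" using h unfolding is_ring_hom_def by (metis add_0 add_cancel_right_right)
  then show ?case by (simp add: PhiL_Nil)
next
  case (Cons c ys)
  have "skc (PhiL q \<iota> phiT (c # ys)) 0 = \<iota> [:c:] + \<iota> [:0, 1:] * \<iota> (Poly ys)"
    unfolding PhiL_Cons[OF q] using Cons.IH p0 by simp
  also have "\<dots> = \<iota> ([:c:] + [:0, 1:] * Poly ys)" using h unfolding is_ring_hom_def by (simp only:)
  also have "[:c:] + [:0, 1:] * Poly ys = Poly (c # ys)" by simp
  finally show ?case by simp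
qed



definition Fp :: "nat \<Rightarrow> (nat \<Rightarrow> 'b::field) \<Rightarrow> nat \<Rightarrow> 'b poly" where
  "Fp q a D = (\<Sum>i\<le>D. monom (a i) (q ^ i - 1))"

context fixes q :: nat and a :: "nat \<Rightarrow> 'b::field" and D :: nat assumes q: "q \<ge> 2"
begin

lemma qinj: "q ^ i - 1 = q ^ j - 1 \<longleftrightarrow> i = j"
proof -
  have "q ^ i \<ge> 1" "q ^ j \<ge> 1" using q by simp_all
  then have "q ^ i - 1 = q ^ j - 1 \<longleftrightarrow> q ^ i = q ^ j" by linarith
  also have "\<dots> \<longleftrightarrow> i = j" using q by simp
  finally show ?thesis .
qed

lemma coeff_Fp: "coeff (Fp q a D) k = (\<Sum>i\<le>D. if q ^ i - 1 = k then a i else 0)"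
  unfolding Fp_def coeff_sum by (simp add: coeff_monom)

lemma coeff_Fp_at: "i \<le> D \<Longrightarrow> coeff (Fp q a D) (q ^ i - 1) = a i"
proof -
  assume i: "i \<le> D"
  have "(\<Sum>j\<le>D. if q ^ j - 1 = q ^ i - 1 then a j else 0) = (\<Sum>j\<le>D. if j = i then a j else 0)"
  proof (intro sum.cong refl)
    fix j show "(if q ^ j - 1 = q ^ i - 1 then a j else 0) = (if j = i then a j else 0)"
      by (simp only: qinj[of j i])
  qed
  also have "\<dots> = a i" using i by simp
  finally show ?thesis unfolding coeff_Fp .
qed

lemma coeff_Fp_off: "(\<And>i. i \<le> D \<Longrightarrow> k \<noteq> q ^ i - 1) \<Longrightarrow> coeff (Fp q a D) k = 0"
  unfolding coeff_Fp by (intro sum.neutral) auto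

lemma coeff_Fp_cases: "coeff (Fp q a D) k = 0 \<or> (\<exists>i\<le>D. k = q ^ i - 1 \<and> coeff (Fp q a D) k = a i)"
proof (cases "\<exists>i\<le>D. k = q ^ i - 1")
  case True
  then obtain i where i: "i \<le> D" "k = q ^ i - 1" by blast
  have "coeff (Fp q a D) k = a i" unfolding i(2) by (rule coeff_Fp_at[OF i(1)])
  then show ?thesis using i by blast
next
  case False
  then have "coeff (Fp q a D) k = 0" by (intro coeff_Fp_off) blast
  then show ?thesis by (rule disjI1)
qed

lemma degree_Fp: "a D \<noteq> 0 \<Longrightarrow> degree (Fp q a D) = q ^ D - 1"
proof -
  assume aD: "a D \<noteq> 0"
  have "coeff (Fp q a D) (q ^ D - 1) \<noteq> 0" using coeff_Fp_at[of D] aD by simp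
  then have "q ^ D - 1 \<le> degree (Fp q a D)" by (rule le_degree)
  moreover have "degree (Fp q a D) \<le> q ^ D - 1"
  proof (rule degree_le, intro allI impI)
    fix k assume k: "q ^ D - 1 < k"
    show "coeff (Fp q a D) k = 0"
    proof (rule coeff_Fp_off)
      fix i assume "i \<le> D"
      then have "q ^ i \<le> q ^ D" using q by (intro power_increasing) auto
      then show "k \<noteq> q ^ i - 1" using k by linarith
    qed
  qed
  ultimately show ?thesis by simp
qed

lemma poly_Fp_times: "x * poly (Fp q a D) x = (\<Sum>i\<le>D. a i * x ^ (q ^ i))"
proof -
  have "x * poly (Fp q a D) x = (\<Sum>i\<le>D. x * (a i * x ^ (q ^ i - 1)))"
    unfolding Fp_def poly_sum by (simp add: poly_monom sum_distrib_left)
  also have "\<dots> = (\<Sum>i\<le>D. a i * x ^ (q ^ i))"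
  proof (intro sum.cong refl)
    fix i
    have "q ^ i \<ge> 1" using q by simp
    then have "x ^ (q ^ i) = x * x ^ (q ^ i - 1)" by (metis Suc_diff_le diff_Suc_1 power_Suc)
    then show "x * (a i * x ^ (q ^ i - 1)) = a i * x ^ (q ^ i)" by (simp add: algebra_simps)
  qed
  finally show ?thesis .
qed

lemma sep_Fp:
  assumes ch: "of_nat q = (0::'b)" and a0: "a 0 \<noteq> 0"
  shows "separable_poly (Fp q a D)"
proof -
  define F where "F = Fp q a D"
  define X where "X = (monom 1 1 :: 'b poly)"
  have cX: "coeff (X * F) (Suc n) = coeff F n" for n unfolding X_def by (simp add: coeff_monom_mult)
  have dG: "pderiv (X * F) = [:a 0:]"
  proof (rule poly_eqI)
    fix n
    have "coeff (pderiv (X * F)) n = of_nat (Suc n) * coeff F n" by (simp add: coeff_pderiv cX)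
    also have "\<dots> = coeff [:a 0:] n"
    proof (cases "n = 0")
      case True
      then show ?thesis using coeff_Fp_at[of 0] unfolding F_def by simp
    next
      case False
      from coeff_Fp_cases[of n] show ?thesis
      proof
        assume "coeff (Fp q a D) n = 0" then show ?thesis using False unfolding F_def by (cases n) auto
      next
        assume "\<exists>i\<le>D. n = q ^ i - 1 \<and> coeff (Fp q a D) n = a i"
        then obtain i where i: "n = q ^ i - 1" by blast
        have "q ^ i \<ge> 1" using q by simp
        then have "Suc n = q ^ i" using i by simp
        moreover have "i \<noteq> 0" using i False by (cases i) auto
        ultimately have "(of_nat (Suc n) :: 'b) = of_nat q ^ i" by simp
        also have "\<dots> = 0" using ch \<open>i \<noteq> 0\<close> by simp
        finally have "(of_nat (Suc n) :: 'b) = 0" .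
        then show ?thesis using False by (cases n) auto
      qed
    qed
    finally show "coeff (pderiv (X * F)) n = coeff [:a 0:] n" .
  qed
  have F0: "F \<noteq> 0"
  proof
    assume "F = 0"
    then have "coeff F (q ^ 0 - 1) = 0" by simp
    then show False using coeff_Fp_at[of 0] a0 unfolding F_def by simp
  qed
  have "coprime F (pderiv F)"
  proof (rule coprimeI)
    fix c assume c: "c dvd F" "c dvd pderiv F"
    have "c dvd X * pderiv F + F * pderiv X" using c by simp
    then have "c dvd [:a 0:]" using dG unfolding pderiv_mult by simp
    moreover have "is_unit [:a 0:]" using a0 by (simp add: is_unit_const_poly_iff dvd_field_iff)
    ultimately show "is_unit c" by (rule dvd_unit_imp_unit)
  qed
  then show ?thesis using F0 unfolding separable_poly_def F_def by simp
qed

end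


lemma of_nat_card_zero: "of_nat (card (UNIV :: 'a set)) = (0::'a::{finite,ring_1})"
proof -
  have "(\<Sum>x\<in>UNIV. x + 1) = (\<Sum>x\<in>UNIV. (x::'a))"
    by (rule sum.reindex_bij_witness[of _ "\<lambda>x. x - 1" "\<lambda>x. x + 1"]) auto
  then show ?thesis by (simp add: sum.distrib)
qed

lemma ring_hom_basics:
  assumes h: "is_ring_hom (\<iota> :: 'a::comm_ring_1 \<Rightarrow> 'b::comm_ring_1)"
  shows "\<iota> 0 = 0" "\<iota> (of_nat n) = of_nat n"
proof -
  have a: "\<iota> (x + y) = \<iota> x + \<iota> y" for x y using h unfolding is_ring_hom_def by blast
  have o: "\<iota> 1 = 1" using h unfolding is_ring_hom_def by blast
  show z: "\<iota> 0 = 0" using a[of 0 0] by simp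
  show "\<iota> (of_nat n) = of_nat n"
    by (induction n) (simp_all add: z a o)
qed

lemma card_ge2: "card (UNIV :: 'k::{finite,field} set) \<ge> 2"
proof -
  have "card {0::'k, 1} = 2" by simp
  moreover have "card {0::'k, 1} \<le> card (UNIV :: 'k set)" by (rule card_mono) auto
  ultimately show ?thesis by simp
qed



theorem lemma8p4:
  fixes f :: "'k::{finite,field_gcd} poly"
    and \<iota> :: "'k poly \<Rightarrow> 'b::field"
    and K :: "'b set" and v :: "'b \<Rightarrow> int"
    and g \<Delta> :: 'b
  assumes "irreducible f"
    and "is_completion_at f \<iota> K v"
    and "is_sep_closure_of K"
    and "g \<in> K" and "val_ge v g 0"
    and "\<Delta> \<in> K" and "\<Delta> \<noteq> 0" and "v \<Delta> = 0"
    and "\<forall>i < 2 * degree f.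
           val_ge v (skc (drinfeld_phi (card (UNIV :: 'k set)) \<iota> [\<iota> [:0, 1:], g, \<Delta>] f) i) 1"
    and "skc (drinfeld_phi (card (UNIV :: 'k set)) \<iota> [\<iota> [:0, 1:], g, \<Delta>] f) (2 * degree f) \<noteq> 0"
    and "v (skc (drinfeld_phi (card (UNIV :: 'k set)) \<iota> [\<iota> [:0, 1:], g, \<Delta>] f) (2 * degree f)) = 0"
  shows "irreducible_galois_module (card (UNIV :: 'k set)) \<iota> [\<iota> [:0, 1:], g, \<Delta>] (galois_group K)
           (torsion (card (UNIV :: 'k set)) \<iota> [\<iota> [:0, 1:], g, \<Delta>] f)"
proof -
  note irr = assms(1) and comp = assms(2) and sc = assms(3) and gK = assms(4) and DK = assms(6)
  note hyp_mid = assms(9) and hyp_D = assms(10) and hyp_vD = assms(11)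
  define q where "q = card (UNIV :: 'k set)"
  define phi where "phi = [\<iota> [:0, 1:], g, \<Delta>]"
  define P where "P = drinfeld_phi q \<iota> phi f"
  define a where "a = skc P"
  define D where "D = 2 * degree f"
  define U where "U = torsion q \<iota> phi f"
  define F where "F = Fp q a D"
  have K: "is_subfield K" and hom: "is_ring_hom \<iota>" and inj: "inj \<iota>" and rK: "range \<iota> \<subseteq> K"
    and v: "is_valuation_on K v" and vmult: "\<And>b. b \<noteq> 0 \<Longrightarrow> v (\<iota> b) = int (multiplicity f b)"
    using comp unfolding is_completion_at_def by blast+
  have q2: "q \<ge> 2" unfolding q_def by (rule card_ge2)
  have q0: "q > 0" using q2 by simp
  have f0: "f \<noteq> 0" using irr by auto
  have fu: "\<not> is_unit f" using irr by (rule irreducible_not_unit)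
  have df: "degree f \<noteq> 0" using fu f0 is_unit_iff_degree by blast
  have ch: "of_nat q = (0::'b)"
  proof -
    have "(of_nat q :: 'k poly) = [:of_nat q:]" by (rule of_nat_poly)
    also have "\<dots> = 0" unfolding q_def by (simp add: of_nat_card_zero)
    finally have "(of_nat q :: 'k poly) = 0" .
    then have "\<iota> (of_nat q) = 0" using ring_hom_basics(1)[OF hom] by simp
    then show ?thesis using ring_hom_basics(2)[OF hom] by simp
  qed
  have phiK: "skc phi i \<in> K" for i
    using rK gK DK subfD(1)[OF K] unfolding phi_def skc_def
    by (cases i; cases "i - 1"; cases "i - 2") (auto simp: nth_Cons')
  have phi3: "skc phi i = 0" if "i \<ge> 3" for i using that unfolding phi_def skc_def by simp
  have phi0: "skc phi 0 = \<iota> [:0, 1:]" unfolding phi_def skc_def by simp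
  have PL: "P = PhiL q \<iota> phi (coeffs f)" unfolding P_def by (rule drinfeld_PhiL)
  have aK: "a i \<in> K" for i unfolding a_def PL
    by (rule PhiL_K[OF K q0]) (use rK phiK in auto)
  have avan: "a i = 0" if "D < i" for i
  proof -
    have "2 * length (coeffs f) - 1 \<le> i" using that f0 unfolding D_def by (simp add: length_coeffs_degree)
    then show ?thesis unfolding a_def PL using PhiL_vanish[where q=q and phiT=phi and xs="coeffs f" and n=i and \<iota>=\<iota>] q0 phi3 by blast
  qed
  have a0: "a 0 = \<iota> f" unfolding a_def PL using PhiL_0[OF q0 hom phi0, of "coeffs f"] by simp
  have iota0: "\<iota> 0 = 0" by (rule ring_hom_basics(1)[OF hom])
  have a0nz: "a 0 \<noteq> 0" using a0 inj f0 iota0 by (metis injD)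
  have va0: "v (a 0) = 1" using a0 vmult[OF f0] multiplicity_self[OF f0 fu] by simp
  have aD: "a D \<noteq> 0" "v (a D) = 0" using hyp_D hyp_vD unfolding a_def P_def D_def q_def phi_def by auto
  have amid: "val_ge v (a i) 1" if "i < D" for i
    using hyp_mid that unfolding a_def P_def D_def q_def phi_def by auto
  have D2: "D \<ge> 2" using df unfolding D_def by simp
  have lenP: "D < length P" using aD(1) unfolding a_def skc_def by (auto split: if_splits)
  have torsion_iff: "x \<in> U \<longleftrightarrow> x * poly F x = 0" for x
  proof -
    have "skew_eval q P x = (\<Sum>i<length P. a i * x ^ (q ^ i))" unfolding skew_eval_def a_def ..
    also have "\<dots> = (\<Sum>i\<le>D. a i * x ^ (q ^ i))"
    proof (rule sum.mono_neutral_right)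
      show "finite {..<length P}" by simp
      show "{..D} \<subseteq> {..<length P}" using lenP by auto
      show "\<forall>i\<in>{..<length P} - {..D}. a i * x ^ (q ^ i) = 0" using avan by auto
    qed
    also have "\<dots> = x * poly F x" unfolding F_def by (rule poly_Fp_times[OF q2, symmetric])
    finally show ?thesis unfolding U_def torsion_def P_def by simp
  qed
  have FK: "Lp K F" unfolding Lp_def F_def coeff_Fp[OF q2]
    using aK subfD(1)[OF K] by (intro allI subf_sum[OF K]) auto
  have cF0: "coeff F 0 = a 0" using coeff_Fp_at[OF q2, where i=0 and a=a and D=D] unfolding F_def by simp
  have degF: "degree F = q ^ D - 1" unfolding F_def by (rule degree_Fp[OF q2, where a=a and D=D, OF aD(1)])
  have lcF: "lead_coeff F = a D" using coeff_Fp_at[OF q2, where i=D and a=a and D=D] degF unfolding F_def by simp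
  have qD: "q ^ D \<ge> 4"
  proof -
    have "q ^ 2 \<le> q ^ D" using D2 q2 by (intro power_increasing) auto
    moreover have "q ^ 2 \<ge> 4" using q2 by (metis power2_nat_le_eq_le numeral_Bit0 power2_eq_square mult_2 le_square numeral_2_eq_2 order_trans mult_le_mono) 
    ultimately show ?thesis by simp
  qed
  have Fmid: "val_ge v (coeff F k) 1" if k: "0 < k" "k < degree F" for k
  proof -
    from coeff_Fp_cases[OF q2, where a=a and D=D and k=k] show ?thesis
    proof
      assume "coeff (Fp q a D) k = 0" then show ?thesis unfolding F_def val_ge_def by simp
    next
      assume "\<exists>i\<le>D. k = q ^ i - 1 \<and> coeff (Fp q a D) k = a i"
      then obtain i where i: "i \<le> D" "k = q ^ i - 1" "coeff F k = a i" unfolding F_def by blast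
      have "i \<noteq> D"
      proof
        assume "i = D"
        then have "k = degree F" using i(2) degF by simp
        then show False using k(2) by simp
      qed
      then show ?thesis using amid i by simp
    qed
  qed
  have Firr: "degree r = 0 \<or> degree s = 0" if "Lp K r" "Lp K s" "F = r * s" for r s
    by (rule eisenstein[OF K v FK]) (use cF0 a0nz va0 Fmid lcF aD that in auto)
  have F0: "F \<noteq> 0" using cF0 a0nz by auto
  have sepF: "separable_poly F" unfolding F_def by (rule sep_Fp[OF q2, where a=a and D=D, OF ch a0nz])
  have dF1: "degree F \<ge> 1" using degF qD by simp
  obtain x0 where x0: "poly F x0 = 0" using sc sepF dF1 unfolding is_sep_closure_of_def by blast
  have x0nz: "x0 \<noteq> 0" using x0 cF0 a0nz poly_0_coeff_0[of F] by auto
  have "x0 \<in> U" using torsion_iff x0 by simp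
  then have Unz: "U \<noteq> {0}" using x0nz by blast
  have rootU: "poly F x = 0" if "x \<in> U" "x \<noteq> 0" for x using torsion_iff that by simp
  show ?thesis
    unfolding irreducible_galois_module_def
  proof (intro conjI allI impI)
    show "torsion (card (UNIV :: 'k set)) \<iota> [\<iota> [:0, 1:], g, \<Delta>] f \<noteq> {0}"
      using Unz unfolding U_def q_def phi_def .
  next
    fix W assume sub: "is_phi_submodule (card (UNIV :: 'k set)) \<iota> [\<iota> [:0, 1:], g, \<Delta>]
        (torsion (card (UNIV :: 'k set)) \<iota> [\<iota> [:0, 1:], g, \<Delta>] f) W"
      and stab: "\<forall>\<sigma>\<in>galois_group K. \<sigma> ` W \<subseteq> W"
    have WU: "W \<subseteq> U" and W0: "0 \<in> W" using sub unfolding is_phi_submodule_def U_def q_def phi_def by blast+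
    show "W = {0} \<or> W = torsion (card (UNIV :: 'k set)) \<iota> [\<iota> [:0, 1:], g, \<Delta>] f"
    proof (rule ccontr)
      assume "\<not> (W = {0} \<or> W = torsion (card (UNIV :: 'k set)) \<iota> [\<iota> [:0, 1:], g, \<Delta>] f)"
      then have ne: "W \<noteq> {0}" "W \<noteq> U" unfolding U_def q_def phi_def by auto
      obtain w where w: "w \<in> W" "w \<noteq> 0" using ne(1) W0 by blast
      obtain u where u: "u \<in> U" "u \<notin> W" using ne(2) WU by blast
      have unz: "u \<noteq> 0" using u W0 by blast
      have "poly F w = 0" using rootU WU w by blast
      moreover have "poly F u = 0" using rootU u unz by blast
      ultimately obtain \<sigma> where \<sigma>: "\<sigma> \<in> galois_group K" "\<sigma> w = u"
        using galois_transitive[OF K sc FK F0 _ _ Firr] by blast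
      then have "u \<in> W" using stab w(1) by blast
      then show False using u(2) by simp
    qed
  qed
qed


end
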